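(* Let $d_1,\dots,d_n$ be positive square-free integers with $[\mathbb{Q}(\sqrt{d_1},\dots,\sqrt{d_n}):\mathbb{Q}]=2^n=r$, $F=\mathbb{Q}(\sqrt{d_1},\dots,\sqrt{d_n})$, let $\mathfrak{M}$ be a fractional ideal of $F$ and $\delta=\min(\mathfrak{M})$. Suppose $s\in\mathfrak{M}$, $s\ne0$, satisfies $|\sigma_j(s)|\le\delta/\sqrt{r}$ for all $j=1,\dots,r$. Then $\|\sigma(s)\|=\delta$ (so $s\in B_{\mathfrak{M}}$), $|\sigma_j(s)|=\delta/\sqrt r$ for all $j$, and $s=x\sqrt{d_T}$ for some $x\in\mathbb{Q}$ and some $T\subseteq\{1,\dots,n\}$; in particular $2^n x^2 d_T=\delta^2$, i.e. the coefficient vector of $s$ is a solution of $2^n\sum_{T'}d_{T'}X_{T'}^2=\delta^2$ with at most one nonzero coordinate.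
   Context: $\sigma_1,\dots,\sigma_r$ are the real embeddings of $F$, $\|\sigma(s)\|=\sqrt{\sum_j\sigma_j(s)^2}$, $\min(\mathfrak{M})=\min\{\|\sigma(t)\|: t\in\mathfrak{M},\ t\ne0\}$, $B_{\mathfrak{M}}=\{t\in\mathfrak{M}:\|\sigma(t)\|=\min(\mathfrak{M})\}$. For $T\subseteq\{1,\dots,n\}$, $d_T=\prod_{l\in T}d_l$ ($d_\emptyset=1$) and $\sqrt{d_T}=\prod_{l\in T}\sqrt{d_l}$; every element of $F$ is uniquely $\sum_T x_T\sqrt{d_T}$ with $x_T\in\mathbb{Q}$ (its coefficient vector). *)

theory Defs
  imports "HOL-Analysis.Analysis" "HOL-Computational_Algebra.Computational_Algebra"
begin

text \<open>The field F = Q(sqrt d_1, ..., sqrt d_n) is realised as a subfield of the reals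
  (all d_l are positive).  Indices l range over {1..n}, subsets T over Pow {1..n}.\<close>

definition dT :: "(nat \<Rightarrow> int) \<Rightarrow> nat set \<Rightarrow> int" where
  "dT d T = (\<Prod>l\<in>T. d l)"

definition sqrt_dT :: "(nat \<Rightarrow> int) \<Rightarrow> nat set \<Rightarrow> real" where
  "sqrt_dT d T = (\<Prod>l\<in>T. sqrt (real_of_int (d l)))"

definition Fld :: "(nat \<Rightarrow> int) \<Rightarrow> nat \<Rightarrow> real set" where
  "Fld d n = {s. \<exists>x :: nat set \<Rightarrow> rat.
      s = (\<Sum>T\<in>Pow {1..n}. of_rat (x T) * sqrt_dT d T)}"

text \<open>[F : Q] = 2^n: the 2^n spanning elements sqrt d_T are Q-linearly independent.\<close>
definition full_degree :: "(nat \<Rightarrow> int) \<Rightarrow> nat \<Rightarrow> bool" where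
  "full_degree d n \<longleftrightarrow> (\<forall>x :: nat set \<Rightarrow> rat.
      (\<Sum>T\<in>Pow {1..n}. of_rat (x T) * sqrt_dT d T) = 0 \<longrightarrow> (\<forall>T\<in>Pow {1..n}. x T = 0))"

text \<open>Real embeddings of F: ring homomorphisms F \<rightarrow> R (extended by 0 outside F).\<close>
definition real_embs :: "(nat \<Rightarrow> int) \<Rightarrow> nat \<Rightarrow> (real \<Rightarrow> real) set" where
  "real_embs d n = {\<sigma>. (\<forall>a\<in>Fld d n. \<forall>b\<in>Fld d n.
        \<sigma> (a + b) = \<sigma> a + \<sigma> b \<and> \<sigma> (a * b) = \<sigma> a * \<sigma> b)
      \<and> \<sigma> 1 = 1 \<and> (\<forall>a. a \<notin> Fld d n \<longrightarrow> \<sigma> a = 0)}"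

definition emb_norm :: "(nat \<Rightarrow> int) \<Rightarrow> nat \<Rightarrow> real \<Rightarrow> real" where
  "emb_norm d n s = sqrt (\<Sum>\<sigma>\<in>real_embs d n. (\<sigma> s)\<^sup>2)"

definition ring_of_integers :: "(nat \<Rightarrow> int) \<Rightarrow> nat \<Rightarrow> real set" where
  "ring_of_integers d n = {a \<in> Fld d n. algebraic_int a}"

definition frac_ideal :: "(nat \<Rightarrow> int) \<Rightarrow> nat \<Rightarrow> real set \<Rightarrow> bool" where
  "frac_ideal d n M \<longleftrightarrow> M \<subseteq> Fld d n \<and> 0 \<in> M \<and> M \<noteq> {0}
     \<and> (\<forall>a\<in>M. \<forall>b\<in>M. a + b \<in> M)
     \<and> (\<forall>a\<in>ring_of_integers d n. \<forall>m\<in>M. a * m \<in> M)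
     \<and> (\<exists>c::int. c \<noteq> 0 \<and> (\<forall>m\<in>M. of_int c * m \<in> ring_of_integers d n))"

text \<open>min(M) = min of ||sigma(t)|| over nonzero t in M (written as an infimum; it is attained).\<close>
definition min_ideal :: "(nat \<Rightarrow> int) \<Rightarrow> nat \<Rightarrow> real set \<Rightarrow> real" where
  "min_ideal d n M = Inf {emb_norm d n t | t. t \<in> M \<and> t \<noteq> 0}"

end

theory Submission
  imports Defs
begin


lemma sum_Pow_insert:
  assumes "finite I" "i \<notin> I"
  shows "(\<Sum>T\<in>Pow (insert i I). g T) = (\<Sum>T\<in>Pow I. g T) + (\<Sum>T\<in>Pow I. g (insert i T))"
proof -
  have inj: "inj_on (insert i) (Pow I)"
    using assms(2) by (auto simp: inj_on_def)
  have "(\<Sum>T\<in>Pow (insert i I). g T) = (\<Sum>T\<in>Pow I \<union> insert i ` Pow I. g T)"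
    by (simp add: Pow_insert)
  also have "\<dots> = (\<Sum>T\<in>Pow I. g T) + (\<Sum>T\<in>insert i ` Pow I. g T)"
    by (rule sum.union_disjoint) (use assms in auto)
  also have "(\<Sum>T\<in>insert i ` Pow I. g T) = (\<Sum>T\<in>Pow I. g (insert i T))"
    by (simp add: sum.reindex[OF inj])
  finally show ?thesis .
qed

lemma sqrt_dT_insert:
  assumes "finite T" "i \<notin> T"
  shows "sqrt_dT d (insert i T) = sqrt (real_of_int (d i)) * sqrt_dT d T"
  using assms by (simp add: sqrt_dT_def)


lemma core:
  fixes d :: "nat \<Rightarrow> int" and I :: "nat set" and x :: "nat set \<Rightarrow> rat"
  assumes "finite I"
  shows "\<forall>l\<in>I. d l > 0 \<Longrightarrow>
    \<forall>y::nat set \<Rightarrow> rat. (\<Sum>T\<in>Pow I. of_rat (y T) * sqrt_dT d T) = 0 \<longrightarrow> (\<forall>T\<in>Pow I. y T = 0) \<Longrightarrow>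
    \<forall>\<epsilon>::nat\<Rightarrow>real. (\<forall>l\<in>I. \<epsilon> l = 1 \<or> \<epsilon> l = -1) \<longrightarrow>
       (\<Sum>T\<in>Pow I. of_rat (x T) * (\<Prod>l\<in>T. \<epsilon> l) * sqrt_dT d T)\<^sup>2 = C \<Longrightarrow>
    \<forall>T\<in>Pow I. \<forall>U\<in>Pow I. x T \<noteq> 0 \<longrightarrow> x U \<noteq> 0 \<longrightarrow> T = U"
  using assms
proof (induction I arbitrary: x C rule: finite_induct)
  case empty
  then show ?case by auto
next
  case (insert i I x C)
  note fin = insert.hyps(1) and iI = insert.hyps(2)
  have di: "d i > 0" using insert.prems(1) by auto
  have sdi: "sqrt (real_of_int (d i)) > 0" using di by simp
  have finT: "finite T" if "T \<in> Pow I" for T using that fin finite_subset by auto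
  have iT: "i \<notin> T" if "T \<in> Pow I" for T using that iI by auto
  have indepI: "\<forall>y::nat set \<Rightarrow> rat. (\<Sum>T\<in>Pow I. of_rat (y T) * sqrt_dT d T) = 0 \<longrightarrow> (\<forall>T\<in>Pow I. y T = 0)"
  proof (intro allI impI)
    fix y :: "nat set \<Rightarrow> rat"
    assume y0: "(\<Sum>T\<in>Pow I. of_rat (y T) * sqrt_dT d T) = 0"
    define y' where "y' T = (if i \<in> T then 0 else y T)" for T
    have "(\<Sum>T\<in>Pow (insert i I). of_rat (y' T) * sqrt_dT d T) =
      (\<Sum>T\<in>Pow I. of_rat (y' T) * sqrt_dT d T) + (\<Sum>T\<in>Pow I. of_rat (y' (insert i T)) * sqrt_dT d (insert i T))"
      by (rule sum_Pow_insert[OF fin iI])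
    also have "(\<Sum>T\<in>Pow I. of_rat (y' T) * sqrt_dT d T) = (\<Sum>T\<in>Pow I. of_rat (y T) * sqrt_dT d T)"
      by (rule sum.cong) (use iT in \<open>auto simp: y'_def\<close>)
    also have "(\<Sum>T\<in>Pow I. of_rat (y' (insert i T)) * sqrt_dT d (insert i T)) = 0"
      by (simp add: y'_def)
    finally have "(\<Sum>T\<in>Pow (insert i I). of_rat (y' T) * sqrt_dT d T) = 0" using y0 by simp
    then have "\<forall>T\<in>Pow (insert i I). y' T = 0" using insert.prems(2) by blast
    then show "\<forall>T\<in>Pow I. y T = 0" using iT unfolding y'_def by (metis PowD PowI subset_insertI2)
  qed
  define A where "A \<epsilon> = (\<Sum>T\<in>Pow I. of_rat (x T) * (\<Prod>l\<in>T. \<epsilon> l) * sqrt_dT d T)" for \<epsilon> :: "nat \<Rightarrow> real"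
  define B where "B \<epsilon> = (\<Sum>T\<in>Pow I. of_rat (x (insert i T)) * (\<Prod>l\<in>T. \<epsilon> l) * sqrt_dT d T)" for \<epsilon> :: "nat \<Rightarrow> real"
  have split: "(\<Sum>T\<in>Pow (insert i I). of_rat (x T) * (\<Prod>l\<in>T. \<epsilon> l) * sqrt_dT d T)
      = A \<epsilon> + \<epsilon> i * sqrt (real_of_int (d i)) * B \<epsilon>" for \<epsilon>
  proof -
    have "(\<Sum>T\<in>Pow (insert i I). of_rat (x T) * (\<Prod>l\<in>T. \<epsilon> l) * sqrt_dT d T)
      = A \<epsilon> + (\<Sum>T\<in>Pow I. of_rat (x (insert i T)) * (\<Prod>l\<in>insert i T. \<epsilon> l) * sqrt_dT d (insert i T))"
      unfolding A_def by (rule sum_Pow_insert[OF fin iI])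
    also have "(\<Sum>T\<in>Pow I. of_rat (x (insert i T)) * (\<Prod>l\<in>insert i T. \<epsilon> l) * sqrt_dT d (insert i T))
      = (\<Sum>T\<in>Pow I. \<epsilon> i * sqrt (real_of_int (d i)) * (of_rat (x (insert i T)) * (\<Prod>l\<in>T. \<epsilon> l) * sqrt_dT d T))"
      by (rule sum.cong) (auto simp: sqrt_dT_insert finT iT prod.insert)
    also have "\<dots> = \<epsilon> i * sqrt (real_of_int (d i)) * B \<epsilon>"
      unfolding B_def by (simp add: sum_distrib_left)
    finally show ?thesis .
  qed
  have Aupd: "A (\<epsilon>(i := c)) = A \<epsilon>" for \<epsilon> c
    unfolding A_def by (rule sum.cong) (use iI in \<open>auto intro!: prod.cong\<close>)
  have Bupd: "B (\<epsilon>(i := c)) = B \<epsilon>" for \<epsilon> c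
    unfolding B_def by (rule sum.cong) (use iI in \<open>auto intro!: prod.cong\<close>)
  have eq: "(A \<epsilon> + \<epsilon> i * sqrt (real_of_int (d i)) * B \<epsilon>)\<^sup>2 = C"
    if "\<forall>l\<in>insert i I. \<epsilon> l = 1 \<or> \<epsilon> l = -1" for \<epsilon>
    using insert.prems(3) that split by metis
  define e1 :: "nat \<Rightarrow> real" where "e1 = (\<lambda>_. 1)"
  have "(A e1 + sqrt (real_of_int (d i)) * B e1)\<^sup>2 = C"
    using eq[of e1] by (simp add: e1_def)
  moreover have "(A e1 - sqrt (real_of_int (d i)) * B e1)\<^sup>2 = C"
    using eq[of "e1(i := -1)"] by (simp add: e1_def Aupd Bupd)
  ultimately have "(A e1 + sqrt (real_of_int (d i)) * B e1)\<^sup>2 - (A e1 - sqrt (real_of_int (d i)) * B e1)\<^sup>2 = 0"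
    by simp
  moreover have "(A e1 + sqrt (real_of_int (d i)) * B e1)\<^sup>2 - (A e1 - sqrt (real_of_int (d i)) * B e1)\<^sup>2
     = 4 * sqrt (real_of_int (d i)) * (A e1 * B e1)"
    by (simp add: power2_eq_square algebra_simps)
  ultimately have "4 * sqrt (real_of_int (d i)) * (A e1 * B e1) = 0" by simp
  then have "A e1 = 0 \<or> B e1 = 0" using sdi by simp
  then show ?case
  proof
    assume "A e1 = 0"
    then have "(\<Sum>T\<in>Pow I. of_rat (x T) * sqrt_dT d T) = 0" by (simp add: A_def e1_def)
    then have x0: "\<forall>T\<in>Pow I. x T = 0" using indepI by blast
    then have A0: "A \<epsilon> = 0" for \<epsilon> by (simp add: A_def)
    define y where "y T = x (insert i T)" for T
    have IH: "\<forall>T\<in>Pow I. \<forall>U\<in>Pow I. y T \<noteq> 0 \<longrightarrow> y U \<noteq> 0 \<longrightarrow> T = U"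
    proof (rule insert.IH)
      show "\<forall>l\<in>I. d l > 0" using insert.prems(1) by auto
      show "\<forall>y::nat set \<Rightarrow> rat. (\<Sum>T\<in>Pow I. of_rat (y T) * sqrt_dT d T) = 0 \<longrightarrow> (\<forall>T\<in>Pow I. y T = 0)"
        by (rule indepI)
      show "\<forall>\<epsilon>::nat\<Rightarrow>real. (\<forall>l\<in>I. \<epsilon> l = 1 \<or> \<epsilon> l = -1) \<longrightarrow>
       (\<Sum>T\<in>Pow I. of_rat (y T) * (\<Prod>l\<in>T. \<epsilon> l) * sqrt_dT d T)\<^sup>2 = C / real_of_int (d i)"
      proof (intro allI impI)
        fix \<epsilon> :: "nat \<Rightarrow> real"
        assume "\<forall>l\<in>I. \<epsilon> l = 1 \<or> \<epsilon> l = -1"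
        then have "(A (\<epsilon>(i:=1)) + 1 * sqrt (real_of_int (d i)) * B (\<epsilon>(i:=1)))\<^sup>2 = C"
          using eq[of "\<epsilon>(i:=1)"] by auto
        then have "real_of_int (d i) * (B \<epsilon>)\<^sup>2 = C"
          using di by (simp add: A0 Bupd power_mult_distrib)
        then show "(\<Sum>T\<in>Pow I. of_rat (y T) * (\<Prod>l\<in>T. \<epsilon> l) * sqrt_dT d T)\<^sup>2 = C / real_of_int (d i)"
          using di by (simp add: B_def y_def field_simps)
      qed
    qed
    show ?case
    proof (intro ballI impI)
      fix T U assume T: "T \<in> Pow (insert i I)" and U: "U \<in> Pow (insert i I)"
        and xT: "x T \<noteq> 0" and xU: "x U \<noteq> 0"
      have "i \<in> T" using T xT x0 by auto
      have "i \<in> U" using U xU x0 by auto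
      have T': "T - {i} \<in> Pow I" "U - {i} \<in> Pow I" using T U by auto
      have "y (T - {i}) \<noteq> 0" using xT \<open>i \<in> T\<close> by (simp add: y_def insert_absorb)
      moreover have "y (U - {i}) \<noteq> 0" using xU \<open>i \<in> U\<close> by (simp add: y_def insert_absorb)
      ultimately have "T - {i} = U - {i}" using IH T' by blast
      then show "T = U" using \<open>i \<in> T\<close> \<open>i \<in> U\<close> by blast
    qed
  next
    assume "B e1 = 0"
    then have "(\<Sum>T\<in>Pow I. of_rat (x (insert i T)) * sqrt_dT d T) = 0" by (simp add: B_def e1_def)
    then have x0: "\<forall>T\<in>Pow I. x (insert i T) = 0" using indepI[rule_format, of "\<lambda>T. x (insert i T)"] by blast
    then have B0: "B \<epsilon> = 0" for \<epsilon> by (simp add: B_def)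
    have IH: "\<forall>T\<in>Pow I. \<forall>U\<in>Pow I. x T \<noteq> 0 \<longrightarrow> x U \<noteq> 0 \<longrightarrow> T = U"
    proof (rule insert.IH)
      show "\<forall>l\<in>I. d l > 0" using insert.prems(1) by auto
      show "\<forall>y::nat set \<Rightarrow> rat. (\<Sum>T\<in>Pow I. of_rat (y T) * sqrt_dT d T) = 0 \<longrightarrow> (\<forall>T\<in>Pow I. y T = 0)"
        by (rule indepI)
      show "\<forall>\<epsilon>::nat\<Rightarrow>real. (\<forall>l\<in>I. \<epsilon> l = 1 \<or> \<epsilon> l = -1) \<longrightarrow>
       (\<Sum>T\<in>Pow I. of_rat (x T) * (\<Prod>l\<in>T. \<epsilon> l) * sqrt_dT d T)\<^sup>2 = C"
      proof (intro allI impI)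
        fix \<epsilon> :: "nat \<Rightarrow> real"
        assume "\<forall>l\<in>I. \<epsilon> l = 1 \<or> \<epsilon> l = -1"
        then have "(A (\<epsilon>(i:=1)) + 1 * sqrt (real_of_int (d i)) * B (\<epsilon>(i:=1)))\<^sup>2 = C"
          using eq[of "\<epsilon>(i:=1)"] by auto
        then have "(A (\<epsilon>(i:=1)))\<^sup>2 = C" by (simp add: B0)
        then have "(A \<epsilon>)\<^sup>2 = C" by (simp only: Aupd)
        then show "(\<Sum>T\<in>Pow I. of_rat (x T) * (\<Prod>l\<in>T. \<epsilon> l) * sqrt_dT d T)\<^sup>2 = C"
          by (simp add: A_def)
      qed
    qed
    show ?case
    proof (intro ballI impI)
      fix T U assume T: "T \<in> Pow (insert i I)" and U: "U \<in> Pow (insert i I)"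
        and xT: "x T \<noteq> 0" and xU: "x U \<noteq> 0"
      have "i \<notin> T"
      proof
        assume "i \<in> T"
        then have "T = insert i (T - {i})" by auto
        then show False using x0 xT T by (metis Diff_subset_conv PowD PowI insert_is_Un)
      qed
      have "i \<notin> U"
      proof
        assume "i \<in> U"
        then have "U = insert i (U - {i})" by auto
        then show False using x0 xU U by (metis Diff_subset_conv PowD PowI insert_is_Un)
      qed
      show "T = U" using IH T U xT xU \<open>i \<notin> T\<close> \<open>i \<notin> U\<close> by auto
    qed
  qed
qed




lemma Fld_add: "a \<in> Fld d n \<Longrightarrow> b \<in> Fld d n \<Longrightarrow> a + b \<in> Fld d n"
proof -
  assume "a \<in> Fld d n" "b \<in> Fld d n"
  then obtain x y where a: "a = (\<Sum>T\<in>Pow {1..n}. of_rat (x T) * sqrt_dT d T)"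
    and b: "b = (\<Sum>T\<in>Pow {1..n}. of_rat (y T) * sqrt_dT d T)" unfolding Fld_def by blast
  have "a + b = (\<Sum>T\<in>Pow {1..n}. of_rat ((\<lambda>T. x T + y T) T) * sqrt_dT d T)"
    unfolding a b by (simp add: sum.distrib[symmetric] of_rat_add distrib_right)
  then show ?thesis unfolding Fld_def mem_Collect_eq by (rule exI[of _ "\<lambda>T. x T + y T"])
qed

lemma Fld_basis: assumes "T \<subseteq> {1..n}" shows "of_rat q * sqrt_dT d T \<in> Fld d n"
proof -
  have "(\<Sum>U\<in>Pow {1..n}. of_rat ((\<lambda>U. if U = T then q else 0) U) * sqrt_dT d U)
     = (\<Sum>U\<in>Pow {1..n}. if U = T then of_rat q * sqrt_dT d T else 0)"
    by (rule sum.cong) auto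
  also have "\<dots> = of_rat q * sqrt_dT d T" using assms by simp
  finally have calc: "(\<Sum>U\<in>Pow {1..n}. of_rat ((\<lambda>U. if U = T then q else 0) U) * sqrt_dT d U) = of_rat q * sqrt_dT d T" .
  show ?thesis unfolding Fld_def mem_Collect_eq
    by (rule exI[of _ "\<lambda>U. if U = T then q else 0"]) (rule calc[symmetric])
qed

lemma sqrt_dT_empty[simp]: "sqrt_dT d {} = 1" by (simp add: sqrt_dT_def)

lemma Fld_rat: "(of_rat q :: real) \<in> Fld d n"
  using Fld_basis[of "{}" n q d] by simp

lemma Fld_sqrtdT: "T \<subseteq> {1..n} \<Longrightarrow> sqrt_dT d T \<in> Fld d n"
  using Fld_basis[of T n 1 d] by simp

lemma Fld_sum: "finite S \<Longrightarrow> (\<forall>T\<in>S. g T \<in> Fld d n) \<Longrightarrow> sum g S \<in> Fld d n"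
proof (induction S rule: finite_induct)
  case empty then show ?case using Fld_rat[of 0 d n] by simp
next
  case (insert a S) then show ?case by (simp add: Fld_add)
qed

lemma Fld_sum': "finite S \<Longrightarrow> (\<And>T. T\<in>S \<Longrightarrow> g T \<in> Fld d n) \<Longrightarrow> sum g S \<in> Fld d n"
  using Fld_sum by blast

lemma sqrt_dT_mult:
  assumes "finite T" "finite U" "\<forall>l\<in>T \<inter> U. d l \<ge> 0"
  shows "sqrt_dT d T * sqrt_dT d U = of_int (dT d (T \<inter> U)) * sqrt_dT d ((T - U) \<union> (U - T))"
proof -
  let ?P = "\<lambda>X. (\<Prod>l\<in>X. sqrt (real_of_int (d l)))"
  have T: "?P T = ?P (T - U) * ?P (T \<inter> U)"
  proof -
    have "?P T = ?P ((T - U) \<union> (T \<inter> U))" by (simp add: Un_Diff_Int)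
    also have "\<dots> = ?P (T - U) * ?P (T \<inter> U)" by (rule prod.union_disjoint) (use assms in auto)
    finally show ?thesis .
  qed
  have U: "?P U = ?P (U - T) * ?P (T \<inter> U)"
  proof -
    have "?P U = ?P ((U - T) \<union> (T \<inter> U))" by (rule arg_cong[where f="?P"]) auto
    also have "\<dots> = ?P (U - T) * ?P (T \<inter> U)" by (rule prod.union_disjoint) (use assms in auto)
    finally show ?thesis .
  qed
  have I: "?P (T \<inter> U) * ?P (T \<inter> U) = of_int (dT d (T \<inter> U))"
    unfolding dT_def of_int_prod prod.distrib[symmetric]
    by (rule prod.cong) (use assms in auto)
  have D: "?P (T - U) * ?P (U - T) = ?P ((T - U) \<union> (U - T))"
    using assms by (subst prod.union_disjoint) auto
  show ?thesis unfolding sqrt_dT_def T U I[symmetric] D[symmetric] by (simp add: algebra_simps)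
qed

lemma Fld_mult:
  assumes d: "\<forall>l\<in>{1..n}. d l > 0" and a: "a \<in> Fld d n" and b: "b \<in> Fld d n"
  shows "a * b \<in> Fld d n"
proof -
  obtain x y where a: "a = (\<Sum>T\<in>Pow {1..n}. of_rat (x T) * sqrt_dT d T)"
    and b: "b = (\<Sum>T\<in>Pow {1..n}. of_rat (y T) * sqrt_dT d T)" using a b unfolding Fld_def by blast
  have "a * b = (\<Sum>T\<in>Pow {1..n}. \<Sum>U\<in>Pow {1..n}. (of_rat (x T) * sqrt_dT d T) * (of_rat (y U) * sqrt_dT d U))"
    unfolding a b by (rule sum_product)
  also have "\<dots> \<in> Fld d n"
  proof (rule Fld_sum')
    fix T assume "T \<in> Pow {1..n}"
    then have T: "T \<subseteq> {1..n}" by simp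
    show "(\<Sum>U\<in>Pow {1..n}. (of_rat (x T) * sqrt_dT d T) * (of_rat (y U) * sqrt_dT d U)) \<in> Fld d n"
    proof (rule Fld_sum')
      fix U assume "U \<in> Pow {1..n}"
      then have U: "U \<subseteq> {1..n}" by simp
      have fin: "finite T" "finite U" using T U finite_subset by auto
      have dd: "\<forall>l\<in>T \<inter> U. d l \<ge> 0" using d T U by (auto intro: less_imp_le)
      have "(of_rat (x T) * sqrt_dT d T) * (of_rat (y U) * sqrt_dT d U)
         = of_rat (x T * y U * of_int (dT d (T \<inter> U))) * sqrt_dT d ((T - U) \<union> (U - T))"
        using sqrt_dT_mult[OF fin dd] by (simp add: of_rat_mult algebra_simps)
      also have "\<dots> \<in> Fld d n" by (rule Fld_basis) (use T U in auto)
      finally show "(of_rat (x T) * sqrt_dT d T) * (of_rat (y U) * sqrt_dT d U) \<in> Fld d n" .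
    qed simp
  qed simp
  finally show ?thesis .
qed




lemma emb_add: "\<sigma> \<in> real_embs d n \<Longrightarrow> a \<in> Fld d n \<Longrightarrow> b \<in> Fld d n \<Longrightarrow> \<sigma> (a + b) = \<sigma> a + \<sigma> b"
  and emb_mult: "\<sigma> \<in> real_embs d n \<Longrightarrow> a \<in> Fld d n \<Longrightarrow> b \<in> Fld d n \<Longrightarrow> \<sigma> (a * b) = \<sigma> a * \<sigma> b"
  and emb_one: "\<sigma> \<in> real_embs d n \<Longrightarrow> \<sigma> 1 = 1"
  and emb_out: "\<sigma> \<in> real_embs d n \<Longrightarrow> a \<notin> Fld d n \<Longrightarrow> \<sigma> a = 0"
  unfolding real_embs_def by auto

lemma Fld_of_int: "(of_int k :: real) \<in> Fld d n"
  using Fld_rat[of "of_int k"] by simp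

lemma Fld_of_nat: "(of_nat k :: real) \<in> Fld d n"
  using Fld_rat[of "of_nat k"] by simp

lemma emb_zero: assumes "\<sigma> \<in> real_embs d n" shows "\<sigma> 0 = 0"
proof -
  have "\<sigma> (0 + 0) = \<sigma> 0 + \<sigma> 0" using emb_add[OF assms, of 0 0] Fld_of_nat[of 0] by simp
  then show ?thesis by simp
qed

lemma emb_nat: assumes "\<sigma> \<in> real_embs d n" shows "\<sigma> (of_nat k) = of_nat k"
proof (induction k)
  case 0 then show ?case using emb_zero[OF assms] by simp
next
  case (Suc k)
  have "\<sigma> (of_nat k + 1) = \<sigma> (of_nat k) + \<sigma> 1"
    using emb_add[OF assms Fld_of_nat Fld_of_nat[of 1]] by simp
  then show ?case using Suc emb_one[OF assms] by (simp add: add.commute)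
qed

lemma emb_int: assumes "\<sigma> \<in> real_embs d n" shows "\<sigma> (of_int k) = of_int k"
proof (cases "k \<ge> 0")
  case True
  then show ?thesis using emb_nat[OF assms, of "nat k"] by simp
next
  case False
  have "\<sigma> (of_int k + of_nat (nat (-k))) = \<sigma> (of_int k) + \<sigma> (of_nat (nat (-k)))"
    by (rule emb_add[OF assms Fld_of_int Fld_of_nat])
  then show ?thesis using False emb_nat[OF assms, of "nat (-k)"] emb_zero[OF assms] by simp
qed

lemma emb_rat: assumes "\<sigma> \<in> real_embs d n" shows "\<sigma> (of_rat q) = of_rat q"
proof -
  obtain a b where qab: "quotient_of q = (a, b)" by (cases "quotient_of q")
  then have q: "q = of_int a / of_int b" and b: "b > 0"
    using quotient_of_div quotient_of_denom_pos by auto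
  have "\<sigma> (of_int b * of_rat q) = \<sigma> (of_int b) * \<sigma> (of_rat q)"
    by (rule emb_mult[OF assms Fld_of_int Fld_rat])
  moreover have "(of_int b * of_rat q :: real) = of_int a"
    using b by (simp add: q of_rat_divide)
  ultimately have "of_int a = of_int b * \<sigma> (of_rat q)"
    using emb_int[OF assms] by simp
  then show ?thesis using b by (simp add: q of_rat_divide field_simps)
qed

lemma emb_sum: assumes "\<sigma> \<in> real_embs d n"
  shows "finite S \<Longrightarrow> (\<forall>T\<in>S. g T \<in> Fld d n) \<Longrightarrow> \<sigma> (sum g S) = (\<Sum>T\<in>S. \<sigma> (g T))"
proof (induction S rule: finite_induct)
  case empty then show ?case using emb_zero[OF assms] by simp
next
  case (insert a S)
  then show ?case using emb_add[OF assms, of "g a" "sum g S"] Fld_sum[of S g d n] by simp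
qed

lemma emb_sqrtdT:
  assumes "\<sigma> \<in> real_embs d n"
  shows "finite T \<Longrightarrow> T \<subseteq> {1..n} \<Longrightarrow> \<sigma> (sqrt_dT d T) = (\<Prod>l\<in>T. \<sigma> (sqrt (real_of_int (d l))))"
proof (induction T rule: finite_induct)
  case empty then show ?case using emb_one[OF assms] by simp
next
  case (insert i T)
  have "sqrt (real_of_int (d i)) = sqrt_dT d {i}" by (simp add: sqrt_dT_def)
  then have si: "sqrt (real_of_int (d i)) \<in> Fld d n" using Fld_sqrtdT[of "{i}" n d] insert by simp
  have sT: "sqrt_dT d T \<in> Fld d n" using Fld_sqrtdT[of T n d] insert by simp
  have "\<sigma> (sqrt_dT d (insert i T)) = \<sigma> (sqrt (real_of_int (d i)) * sqrt_dT d T)"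
    using insert by (simp add: sqrt_dT_insert)
  also have "\<dots> = \<sigma> (sqrt (real_of_int (d i))) * \<sigma> (sqrt_dT d T)"
    by (rule emb_mult[OF assms si sT])
  finally show ?case using insert by simp
qed

lemma emb_val:
  assumes "\<sigma> \<in> real_embs d n"
  shows "\<sigma> (\<Sum>T\<in>Pow {1..n}. of_rat (x T) * sqrt_dT d T)
     = (\<Sum>T\<in>Pow {1..n}. of_rat (x T) * (\<Prod>l\<in>T. \<sigma> (sqrt (real_of_int (d l)))))"
proof -
  have "\<sigma> (\<Sum>T\<in>Pow {1..n}. of_rat (x T) * sqrt_dT d T) = (\<Sum>T\<in>Pow {1..n}. \<sigma> (of_rat (x T) * sqrt_dT d T))"
    by (rule emb_sum[OF assms]) (use Fld_basis in blast)+
  also have "\<dots> = (\<Sum>T\<in>Pow {1..n}. of_rat (x T) * (\<Prod>l\<in>T. \<sigma> (sqrt (real_of_int (d l)))))"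
  proof (rule sum.cong)
    fix T assume "T \<in> Pow {1..n}"
    then have T: "T \<subseteq> {1..n}" "finite T" using finite_subset by auto
    show "\<sigma> (of_rat (x T) * sqrt_dT d T) = of_rat (x T) * (\<Prod>l\<in>T. \<sigma> (sqrt (real_of_int (d l))))"
      using emb_mult[OF assms Fld_rat Fld_sqrtdT[OF T(1)]] emb_rat[OF assms] emb_sqrtdT[OF assms T(2,1)]
      by simp
  qed simp
  finally show ?thesis .
qed

lemma emb_sq:
  assumes "\<sigma> \<in> real_embs d n" "l \<in> {1..n}" "d l > 0"
  shows "\<sigma> (sqrt (real_of_int (d l))) = sqrt (real_of_int (d l)) \<or> \<sigma> (sqrt (real_of_int (d l))) = - sqrt (real_of_int (d l))"
proof -
  have "sqrt (real_of_int (d l)) = sqrt_dT d {l}" by (simp add: sqrt_dT_def)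
  then have si: "sqrt (real_of_int (d l)) \<in> Fld d n" using Fld_sqrtdT[of "{l}" n d] assms by simp
  have "(\<sigma> (sqrt (real_of_int (d l))))\<^sup>2 = \<sigma> (sqrt (real_of_int (d l)) * sqrt (real_of_int (d l)))"
    using emb_mult[OF assms(1) si si] by (simp add: power2_eq_square)
  also have "\<dots> = \<sigma> (of_int (d l))" using assms(3) by simp
  also have "\<dots> = (sqrt (real_of_int (d l)))\<^sup>2" using emb_int[OF assms(1)] assms(3) by simp
  finally show ?thesis by (simp add: power2_eq_iff)
qed

definition id_emb :: "(nat \<Rightarrow> int) \<Rightarrow> nat \<Rightarrow> real \<Rightarrow> real" where
  "id_emb d n a = (if a \<in> Fld d n then a else 0)"

lemma id_emb_in: assumes "\<forall>l\<in>{1..n}. d l > 0" shows "id_emb d n \<in> real_embs d n"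
  unfolding real_embs_def id_emb_def using Fld_add Fld_mult[OF assms] Fld_rat[of 1 d n] by auto




lemma emb_eq:
  assumes s: "\<sigma> \<in> real_embs d n" and t: "\<tau> \<in> real_embs d n"
    and eq: "\<forall>l\<in>{1..n}. \<sigma> (sqrt (real_of_int (d l))) = \<tau> (sqrt (real_of_int (d l)))"
  shows "\<sigma> = \<tau>"
proof
  fix a
  show "\<sigma> a = \<tau> a"
  proof (cases "a \<in> Fld d n")
    case True
    then obtain x where a: "a = (\<Sum>T\<in>Pow {1..n}. of_rat (x T) * sqrt_dT d T)" unfolding Fld_def by blast
    show ?thesis unfolding a emb_val[OF s] emb_val[OF t]
      by (rule sum.cong) (use eq in \<open>auto intro!: prod.cong\<close>)
  next
    case False then show ?thesis using emb_out[OF s] emb_out[OF t] by simp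
  qed
qed

lemma sqrt_dT_sq:
  assumes "T \<subseteq> {1..n}" "\<forall>l\<in>{1..n}. d l > 0"
  shows "(sqrt_dT d T)\<^sup>2 = of_int (dT d T)"
  unfolding sqrt_dT_def dT_def of_int_prod prod_power_distrib
  using assms by (auto intro!: prod.cong simp: subset_iff less_imp_le)

lemma card_two: "(a::real) \<noteq> 0 \<Longrightarrow> card {a, -a} = 2" by simp

theorem mainTheorem9:
  fixes d :: "nat \<Rightarrow> int" and n :: nat and M :: "real set" and s :: real
  assumes d_pos: "\<forall>l\<in>{1..n}. d l > 0"
    and d_sqfree: "\<forall>l\<in>{1..n}. squarefree (d l)"
    and deg: "full_degree d n"
    and M: "frac_ideal d n M"
    and s_in: "s \<in> M" and s_nz: "s \<noteq> 0"
    and small: "\<forall>\<sigma>\<in>real_embs d n. \<bar>\<sigma> s\<bar> \<le> min_ideal d n M / sqrt (2 ^ n)"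
  shows "emb_norm d n s = min_ideal d n M
    \<and> (\<forall>\<sigma>\<in>real_embs d n. \<bar>\<sigma> s\<bar> = min_ideal d n M / sqrt (2 ^ n))
    \<and> (\<exists>x::rat. \<exists>T. T \<subseteq> {1..n} \<and> s = of_rat x * sqrt_dT d T
         \<and> 2 ^ n * (of_rat x)\<^sup>2 * of_int (dT d T) = (min_ideal d n M)\<^sup>2)"
proof -
  define E where "E = real_embs d n"
  define \<delta> where "\<delta> = min_ideal d n M"
  have MF: "M \<subseteq> Fld d n" using M by (simp add: frac_ideal_def)
  have sF: "s \<in> Fld d n" using MF s_in by blast
  obtain x where sx: "s = (\<Sum>T\<in>Pow {1..n}. of_rat (x T) * sqrt_dT d T)" using sF unfolding Fld_def by blast
  define \<phi> where "\<phi> \<sigma> = restrict (\<lambda>l. \<sigma> (sqrt (real_of_int (d l)))) {1..n}" for \<sigma> :: "real \<Rightarrow> real"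
  define P where "P = PiE {1..n} (\<lambda>l. {sqrt (real_of_int (d l)), - sqrt (real_of_int (d l))})"
  have injphi: "inj_on \<phi> E"
  proof (rule inj_onI)
    fix \<sigma> \<tau> assume st: "\<sigma> \<in> E" "\<tau> \<in> E" and eq: "\<phi> \<sigma> = \<phi> \<tau>"
    have "\<sigma> (sqrt (real_of_int (d l))) = \<tau> (sqrt (real_of_int (d l)))" if "l \<in> {1..n}" for l
      using fun_cong[OF eq, of l] that by (simp add: \<phi>_def)
    then show "\<sigma> = \<tau>" using emb_eq st unfolding E_def by blast
  qed
  have imphi: "\<phi> ` E \<subseteq> P"
    using emb_sq d_pos unfolding \<phi>_def P_def E_def by fastforce
  have finP: "finite P" by (simp add: P_def finite_PiE)
  have cardP: "card P = 2 ^ n"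
  proof -
    have "card P = (\<Prod>l\<in>{1..n}. card {sqrt (real_of_int (d l)), - sqrt (real_of_int (d l))})"
      unfolding P_def by (rule card_PiE) simp
    also have "\<dots> = (\<Prod>l\<in>{1..n}. 2)"
      by (intro prod.cong refl card_two) (use d_pos in fastforce)
    finally show ?thesis by simp
  qed
  have finE: "finite E" using finite_imageD[OF finite_subset[OF imphi finP] injphi] .
  have cardE_le: "card E \<le> 2 ^ n"
    using card_image[OF injphi] card_mono[OF finP imphi] cardP by simp
  have s0: "id_emb d n \<in> E" using id_emb_in[OF d_pos] by (simp add: E_def)
  have s_le: "\<bar>s\<bar> \<le> \<delta> / sqrt (2 ^ n)"
    using small s0 sF unfolding E_def \<delta>_def id_emb_def by fastforce
  have sq2: "sqrt (2 ^ n :: real) > 0" by simp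
  have \<delta>pos: "\<delta> > 0"
  proof -
    have "\<delta> / sqrt (2 ^ n) > 0" using s_le s_nz by linarith
    then show ?thesis using sq2 by (simp add: zero_less_divide_iff)
  qed
  have each: "(\<sigma> s)\<^sup>2 \<le> \<delta>\<^sup>2 / 2 ^ n" if "\<sigma> \<in> E" for \<sigma>
  proof -
    have "\<bar>\<sigma> s\<bar> \<le> \<delta> / sqrt (2 ^ n)" using small that unfolding E_def \<delta>_def by blast
    then have "\<bar>\<sigma> s\<bar>\<^sup>2 \<le> (\<delta> / sqrt (2 ^ n))\<^sup>2" by (rule power_mono) simp
    then show ?thesis by (simp add: power_divide)
  qed
  define S where "S = (\<Sum>\<sigma>\<in>E. (\<sigma> s)\<^sup>2)"
  have S_le: "S \<le> real (card E) * (\<delta>\<^sup>2 / 2 ^ n)"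
    unfolding S_def by (rule sum_bounded_above) (use each in auto)
  have S_nn: "S \<ge> 0" unfolding S_def by (simp add: sum_nonneg)
  have norm_eq: "emb_norm d n s = sqrt S" by (simp add: emb_norm_def S_def E_def)
  have norm_ge: "\<delta> \<le> emb_norm d n s"
    unfolding \<delta>_def min_ideal_def
  proof (rule cInf_lower)
    show "emb_norm d n s \<in> {emb_norm d n t |t. t \<in> M \<and> t \<noteq> 0}" using s_in s_nz by blast
    show "bdd_below {emb_norm d n t |t. t \<in> M \<and> t \<noteq> 0}"
      by (rule bdd_belowI[of _ 0]) (auto simp: emb_norm_def intro!: sum_nonneg)
  qed
  have "\<delta>\<^sup>2 \<le> (sqrt S)\<^sup>2" using norm_ge \<delta>pos norm_eq by (intro power_mono) auto
  then have S_ge: "\<delta>\<^sup>2 \<le> S" using S_nn by simp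
  have d2: "\<delta>\<^sup>2 > 0" using \<delta>pos by simp
  have "\<delta>\<^sup>2 \<le> real (card E) * (\<delta>\<^sup>2 / 2 ^ n)" using S_ge S_le by linarith
  then have "\<delta>\<^sup>2 * 2 ^ n \<le> real (card E) * \<delta>\<^sup>2" by (simp add: field_simps)
  then have "2 ^ n \<le> real (card E)" using d2 by (simp add: mult.commute)
  then have "2 ^ n \<le> card E" by (metis of_nat_le_iff of_nat_numeral of_nat_power)
  then have cardE: "card E = 2 ^ n" using cardE_le by simp
  have S_eq: "S = \<delta>\<^sup>2" using S_le S_ge cardE by simp
  have eqsq: "\<forall>\<sigma>\<in>E. (\<sigma> s)\<^sup>2 = \<delta>\<^sup>2 / 2 ^ n"
  proof -
    have "(\<Sum>\<sigma>\<in>E. \<delta>\<^sup>2 / 2 ^ n - (\<sigma> s)\<^sup>2) = real (card E) * (\<delta>\<^sup>2 / 2 ^ n) - S"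
      unfolding S_def by (simp add: sum_subtractf)
    also have "\<dots> = 0" using cardE S_eq by simp
    finally have "(\<Sum>\<sigma>\<in>E. \<delta>\<^sup>2 / 2 ^ n - (\<sigma> s)\<^sup>2) = 0" .
    then have "\<forall>\<sigma>\<in>E. \<delta>\<^sup>2 / 2 ^ n - (\<sigma> s)\<^sup>2 = 0"
      using sum_nonneg_eq_0_iff[OF finE, of "\<lambda>\<sigma>. \<delta>\<^sup>2 / 2 ^ n - (\<sigma> s)\<^sup>2"] each by force
    then show ?thesis by simp
  qed
  have part1: "emb_norm d n s = \<delta>" using norm_eq S_eq \<delta>pos by simp
  have part2: "\<forall>\<sigma>\<in>E. \<bar>\<sigma> s\<bar> = \<delta> / sqrt (2 ^ n)"
  proof
    fix \<sigma> assume "\<sigma> \<in> E"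
    then have "sqrt ((\<sigma> s)\<^sup>2) = sqrt (\<delta>\<^sup>2 / 2 ^ n)" using eqsq by simp
    then show "\<bar>\<sigma> s\<bar> = \<delta> / sqrt (2 ^ n)" using \<delta>pos by (simp add: real_sqrt_divide)
  qed
  have surj: "\<phi> ` E = P"
    by (rule card_subset_eq[OF finP imphi]) (simp add: card_image[OF injphi] cardE cardP)
  have hyp: "\<forall>\<epsilon>::nat\<Rightarrow>real. (\<forall>l\<in>{1..n}. \<epsilon> l = 1 \<or> \<epsilon> l = -1) \<longrightarrow>
       (\<Sum>T\<in>Pow {1..n}. of_rat (x T) * (\<Prod>l\<in>T. \<epsilon> l) * sqrt_dT d T)\<^sup>2 = \<delta>\<^sup>2 / 2 ^ n"
  proof (intro allI impI)
    fix \<epsilon> :: "nat \<Rightarrow> real" assume eps: "\<forall>l\<in>{1..n}. \<epsilon> l = 1 \<or> \<epsilon> l = -1"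
    define v where "v = restrict (\<lambda>l. \<epsilon> l * sqrt (real_of_int (d l))) {1..n}"
    have "v \<in> P" unfolding v_def P_def using eps by auto
    then obtain \<sigma> where \<sigma>: "\<sigma> \<in> E" "\<phi> \<sigma> = v" using surj by (metis imageE)
    have sv: "\<sigma> (sqrt (real_of_int (d l))) = \<epsilon> l * sqrt (real_of_int (d l))" if "l \<in> {1..n}" for l
      using fun_cong[OF \<sigma>(2), of l] that by (simp add: \<phi>_def v_def)
    have "\<sigma> s = (\<Sum>T\<in>Pow {1..n}. of_rat (x T) * (\<Prod>l\<in>T. \<sigma> (sqrt (real_of_int (d l)))))"
      unfolding sx using emb_val \<sigma>(1) unfolding E_def by blast
    also have "\<dots> = (\<Sum>T\<in>Pow {1..n}. of_rat (x T) * (\<Prod>l\<in>T. \<epsilon> l) * sqrt_dT d T)"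
    proof (rule sum.cong)
      fix T assume "T \<in> Pow {1..n}"
      then have "(\<Prod>l\<in>T. \<sigma> (sqrt (real_of_int (d l)))) = (\<Prod>l\<in>T. \<epsilon> l * sqrt (real_of_int (d l)))"
        using sv by (auto intro!: prod.cong)
      then show "of_rat (x T) * (\<Prod>l\<in>T. \<sigma> (sqrt (real_of_int (d l)))) = of_rat (x T) * (\<Prod>l\<in>T. \<epsilon> l) * sqrt_dT d T"
        by (simp add: prod.distrib sqrt_dT_def)
    qed simp
    finally show "(\<Sum>T\<in>Pow {1..n}. of_rat (x T) * (\<Prod>l\<in>T. \<epsilon> l) * sqrt_dT d T)\<^sup>2 = \<delta>\<^sup>2 / 2 ^ n"
      using eqsq \<sigma>(1) by metis
  qed
  have supp: "\<forall>T\<in>Pow {1..n}. \<forall>U\<in>Pow {1..n}. x T \<noteq> 0 \<longrightarrow> x U \<noteq> 0 \<longrightarrow> T = U"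
    by (rule core[OF _ d_pos _ hyp]) (use deg in \<open>simp_all add: full_degree_def\<close>)
  obtain T where T: "T \<in> Pow {1..n}" "x T \<noteq> 0"
  proof -
    have "\<exists>T\<in>Pow {1..n}. x T \<noteq> 0"
    proof (rule ccontr)
      assume "\<not> ?thesis"
      then have "s = 0" unfolding sx by simp
      then show False using s_nz by simp
    qed
    then show ?thesis using that by blast
  qed
  have s_eq: "s = of_rat (x T) * sqrt_dT d T"
  proof -
    have "s = (\<Sum>U\<in>Pow {1..n}. if U = T then of_rat (x T) * sqrt_dT d T else 0)"
      unfolding sx by (rule sum.cong) (use supp T in auto)
    also have "\<dots> = of_rat (x T) * sqrt_dT d T" using T by simp
    finally show ?thesis .
  qed
  have "s\<^sup>2 = \<delta>\<^sup>2 / 2 ^ n" using eqsq s0 sF by (auto simp: id_emb_def)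
  moreover have "s\<^sup>2 = (of_rat (x T))\<^sup>2 * of_int (dT d T)"
    using s_eq sqrt_dT_sq[of T n d] T d_pos by (simp add: power_mult_distrib)
  ultimately have "2 ^ n * (of_rat (x T))\<^sup>2 * of_int (dT d T) = \<delta>\<^sup>2" by (simp add: field_simps)
  then have part3: "\<exists>x::rat. \<exists>T. T \<subseteq> {1..n} \<and> s = of_rat x * sqrt_dT d T
         \<and> 2 ^ n * (of_rat x)\<^sup>2 * of_int (dT d T) = \<delta>\<^sup>2"
    using s_eq T by blast
  show ?thesis using part1 part2 part3 unfolding E_def \<delta>_def by blast
qed


end
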